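(* For every integer $m\ge2$ and every $\alpha\in[0,1]$, no randomized social choice rule whose output distribution depends only on the plurality scores $(\mathrm{plu}(c))_{c\in C}$ has distortion smaller than $2+\alpha-2/m$ on $\alpha$-decisive metric spaces.
   Context: An election: voters $V=\{1,\dots,n\}$, a fixed finite set $C$ of $m$ candidates, a profile of linear orders over $C$; $\mathrm{top}(i)$ is $i$'s first choice; $\mathrm{plu}(c)=|\{i:\mathrm{top}(i)=c\}|$ (plurality score). A distance function $d$ on $V\cup C$ is nonnegative, symmetric and satisfies the triangle inequality (co-location allowed); consistent with the profile if $d(i,c)\le d(i,c')$ whenever $i$ ranks $c$ above $c'$; $\alpha$-decisive if $d(i,\mathrm{top}(i))\le\alpha\,d(i,c)$ for all $i$ and $c\ne\mathrm{top}(i)$. $\mathrm{SC}(c)=\sum_i d(i,c)$. A randomized rule maps profiles (any number of voters) to probability distributions over $C$; its distortion on $\alpha$-decisive spaces is $\sup_\sigma\sup_d\mathbb{E}[\mathrm{SC}(f(\sigma))]/\min_c\mathrm{SC}(c)$ over $\alpha$-decisive consistent $d$. *)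

theory Defs
  imports "HOL-Probability.Probability"
begin

text \<open>Candidates form a finite type 'c (m = CARD('c)). A ranking (linear order over
  the candidates) is a duplicate-free list enumerating all candidates, best first.
  A profile is a list of rankings; voter i (i < length P) has ranking P ! i.\<close>

definition is_ranking :: "'c::finite list \<Rightarrow> bool" where
  "is_ranking r \<longleftrightarrow> distinct r \<and> set r = UNIV"

definition is_profile :: "'c::finite list list \<Rightarrow> bool" where
  "is_profile P \<longleftrightarrow> (\<forall>r\<in>set P. is_ranking r)"

definition top_choice :: "'c list \<Rightarrow> 'c" where
  "top_choice r = hd r"

definition ranks_above :: "'c list \<Rightarrow> 'c \<Rightarrow> 'c \<Rightarrow> bool" where
  "ranks_above r c c' \<longleftrightarrow> (\<exists>i j. i < j \<and> j < length r \<and> r ! i = c \<and> r ! j = c')"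

definition plu :: "'c list list \<Rightarrow> 'c \<Rightarrow> nat" where
  "plu P c = card {i. i < length P \<and> top_choice (P ! i) = c}"

text \<open>Points of V \<union> C: voter i is Inl i, candidate c is Inr c.\<close>
definition points :: "'c list list \<Rightarrow> (nat + 'c) set" where
  "points P = Inl ` {..<length P} \<union> range Inr"

definition is_distance :: "'c list list \<Rightarrow> (nat + 'c \<Rightarrow> nat + 'c \<Rightarrow> real) \<Rightarrow> bool" where
  "is_distance P d \<longleftrightarrow>
     (\<forall>x\<in>points P. d x x = 0) \<and>
     (\<forall>x\<in>points P. \<forall>y\<in>points P. 0 \<le> d x y \<and> d x y = d y x) \<and>
     (\<forall>x\<in>points P. \<forall>y\<in>points P. \<forall>z\<in>points P. d x z \<le> d x y + d y z)"

definition consistent :: "'c list list \<Rightarrow> (nat + 'c \<Rightarrow> nat + 'c \<Rightarrow> real) \<Rightarrow> bool" where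
  "consistent P d \<longleftrightarrow>
     (\<forall>i<length P. \<forall>c c'. ranks_above (P ! i) c c' \<longrightarrow> d (Inl i) (Inr c) \<le> d (Inl i) (Inr c'))"

definition decisive :: "real \<Rightarrow> 'c list list \<Rightarrow> (nat + 'c \<Rightarrow> nat + 'c \<Rightarrow> real) \<Rightarrow> bool" where
  "decisive \<alpha> P d \<longleftrightarrow>
     (\<forall>i<length P. \<forall>c. c \<noteq> top_choice (P ! i) \<longrightarrow>
        d (Inl i) (Inr (top_choice (P ! i))) \<le> \<alpha> * d (Inl i) (Inr c))"

definition SC :: "'c list list \<Rightarrow> (nat + 'c \<Rightarrow> nat + 'c \<Rightarrow> real) \<Rightarrow> 'c \<Rightarrow> real" where
  "SC P d c = (\<Sum>i<length P. d (Inl i) (Inr c))"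

definition plurality_based :: "('c::finite list list \<Rightarrow> 'c pmf) \<Rightarrow> bool" where
  "plurality_based f \<longleftrightarrow>
     (\<forall>P Q. is_profile P \<longrightarrow> is_profile Q \<longrightarrow> (\<forall>c. plu P c = plu Q c) \<longrightarrow> f P = f Q)"

text \<open>Distortion on alpha-decisive spaces, as an extended real. The ratio is taken
  in ereal, so a positive expected cost over an optimum cost of 0 counts as \<infinity>
  (and 0/0 counts as 0).\<close>
definition distortion :: "real \<Rightarrow> ('c::finite list list \<Rightarrow> 'c pmf) \<Rightarrow> ereal" where
  "distortion \<alpha> f =
     (SUP Pd \<in> {(P, d). is_profile P \<and> P \<noteq> [] \<and> is_distance P d \<and> consistent P d \<and> decisive \<alpha> P d}.
        ereal (measure_pmf.expectation (f (fst Pd)) (SC (fst Pd) (snd Pd)))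
        / ereal (Min (range (SC (fst Pd) (snd Pd)))))"

end

theory Submission imports Defs begin

definition rk :: "'c list \<Rightarrow> 'c \<Rightarrow> 'c \<Rightarrow> 'c list" where
  "rk cs a t = t # filter (\<lambda>x. x \<noteq> t) (a # filter (\<lambda>x. x \<noteq> a) cs)"

lemma rk_ranking:
  fixes cs :: "'c::finite list"
  assumes "distinct cs" "set cs = UNIV"
  shows "is_ranking (rk cs a t)"
  using assms unfolding is_ranking_def rk_def by (auto simp: distinct_filter)

lemma top_rk: "top_choice (rk cs a t) = t"
  by (simp add: top_choice_def rk_def)

lemma ranks_above_rk:
  fixes cs :: "'c::finite list"
  assumes "distinct cs" "set cs = UNIV" "ranks_above (rk cs a t) c c'"
  shows "c' \<noteq> t \<and> (c' = a \<longrightarrow> c = t)"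
proof -
  let ?r = "rk cs a t"
  have d: "distinct ?r" using rk_ranking[OF assms(1,2)] by (simp add: is_ranking_def)
  obtain i j where ij: "i < j" "j < length ?r" "?r ! i = c" "?r ! j = c'"
    using assms(3) unfolding ranks_above_def by blast
  have r0: "?r ! 0 = t" by (simp add: rk_def)
  have ne: "c' \<noteq> t"
  proof
    assume "c' = t"
    then have "?r ! j = ?r ! 0" using ij r0 by simp
    moreover have "0 < length ?r" by (simp add: rk_def)
    ultimately have "j = 0" using nth_eq_iff_index_eq[OF d ij(2)] by blast
    then show False using ij by simp
  qed
  moreover have "c = t" if "c' = a"
  proof -
    have ta: "t \<noteq> a" using ne that by simp
    have r1: "?r ! 1 = a" "1 < length ?r" using ta by (simp_all add: rk_def)
    have "?r ! j = ?r ! 1" using ij r1 that by simp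
    then have "j = 1" using nth_eq_iff_index_eq[OF d ij(2) r1(2)] by blast
    then have "i = 0" using ij by simp
    then show ?thesis using ij r0 by simp
  qed
  ultimately show ?thesis by blast
qed

lemma sum_abs_delta:
  fixes k :: real
  assumes "0 \<le> k"
  shows "(\<Sum>x\<in>(UNIV::'c::finite set). \<bar>(if P \<and> x = t then 1 else 0) - (if Q \<and> x = c then k else 0)\<bar>)
     = (if P \<and> Q \<and> t = c then \<bar>1 - k\<bar> else (if P then 1 else 0) + (if Q then k else 0))"
proof (cases "P \<and> Q \<and> t = c")
  case True
  then have "\<And>x. \<bar>(if P \<and> x = t then 1 else 0) - (if Q \<and> x = c then k else 0)\<bar> = (if x = t then \<bar>1 - k\<bar> else 0)"
    by auto
  then show ?thesis using True by simp
next
  case False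
  then have "\<And>x. \<bar>(if P \<and> x = t then 1 else 0) - (if Q \<and> x = c then k else 0)\<bar> =
     (if P \<and> x = t then 1 else 0) + (if Q \<and> x = c then k else 0)"
    using assms by auto
  then show ?thesis using False by (simp add: sum.distrib)
qed

definition pos :: "'c list \<Rightarrow> real \<Rightarrow> 'c \<Rightarrow> nat + 'c \<Rightarrow> 'c \<Rightarrow> real" where
  "pos cs \<alpha> a p = (case p of Inl i \<Rightarrow> (\<lambda>x. if cs ! i \<noteq> a \<and> x = cs ! i then 1 else 0)
                            | Inr c \<Rightarrow> (\<lambda>x. if c \<noteq> a \<and> x = c then 1 + \<alpha> else 0))"

definition dd :: "'c::finite list \<Rightarrow> real \<Rightarrow> 'c \<Rightarrow> nat + 'c \<Rightarrow> nat + 'c \<Rightarrow> real" where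
  "dd cs \<alpha> a p q = (\<Sum>x\<in>UNIV. \<bar>pos cs \<alpha> a p x - pos cs \<alpha> a q x\<bar>)"

lemma dd_distance: "is_distance P (dd cs \<alpha> a)"
proof -
  have tri: "dd cs \<alpha> a x z \<le> dd cs \<alpha> a x y + dd cs \<alpha> a y z" for x y z
    unfolding dd_def sum.distrib[symmetric]
    by (rule sum_mono) (simp add: abs_triangle_ineq4 abs_diff_triangle_ineq)
  have "dd cs \<alpha> a x x = 0" "0 \<le> dd cs \<alpha> a x y" "dd cs \<alpha> a x y = dd cs \<alpha> a y x" for x y
    by (auto simp: dd_def sum_nonneg abs_minus_commute)
  then show ?thesis unfolding is_distance_def
    using tri by blast
qed

definition gg :: "real \<Rightarrow> 'c \<Rightarrow> 'c \<Rightarrow> 'c \<Rightarrow> real" where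
  "gg \<alpha> a t c = (if t \<noteq> a \<and> c \<noteq> a \<and> t = c then \<alpha> else (if t \<noteq> a then 1 else 0) + (if c \<noteq> a then 1 + \<alpha> else 0))"

lemma dd_val:
  assumes "0 \<le> \<alpha>"
  shows "dd cs \<alpha> a (Inl i) (Inr c) = gg \<alpha> a (cs ! i) c"
proof -
  have "dd cs \<alpha> a (Inl i) (Inr c) = (\<Sum>x\<in>UNIV. \<bar>(if cs ! i \<noteq> a \<and> x = cs ! i then 1 else 0) - (if c \<noteq> a \<and> x = c then 1 + \<alpha> else 0)\<bar>)"
    by (simp add: dd_def pos_def)
  also have "\<dots> = (if cs ! i \<noteq> a \<and> c \<noteq> a \<and> cs ! i = c then \<bar>1 - (1 + \<alpha>)\<bar> else (if cs ! i \<noteq> a then 1 else 0) + (if c \<noteq> a then 1 + \<alpha> else 0))"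
    by (rule sum_abs_delta) (use assms in simp)
  also have "\<dots> = gg \<alpha> a (cs ! i) c" using assms by (simp add: gg_def)
  finally show ?thesis .
qed

lemma gg_alt: "gg \<alpha> a t c = (1 - (if t = a then 1 else 0)) + (if c \<noteq> a then 1 + \<alpha> else 0)
   - (if c \<noteq> a \<and> t = c then 2 else 0)"
  unfolding gg_def by auto

theorem theorem4:
  fixes f :: "'c::finite list list \<Rightarrow> 'c pmf" and \<alpha> :: real
  assumes "CARD('c) \<ge> 2" and "0 \<le> \<alpha>" and "\<alpha> \<le> 1" and "plurality_based f"
  shows "distortion \<alpha> f \<ge> ereal (2 + \<alpha> - 2 / real CARD('c))"
proof -
  define n where "n = CARD('c)"
  have n2: "real n \<ge> 2" using assms(1) n_def by simp
  obtain cs :: "'c list" where cs: "set cs = UNIV" "distinct cs"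
    using finite_distinct_list[of "UNIV :: 'c set"] by auto
  have lcs: "length cs = n" using distinct_card[OF cs(2)] cs(1) n_def by simp
  define P0 where "P0 = map (rk cs (hd cs)) cs"
  define p where "p = f P0"
  obtain a where a: "pmf p a = Min (range (pmf p))"
  proof -
    have "Min (range (pmf p)) \<in> range (pmf p)" by (rule Min_in) auto
    then show ?thesis using that by (metis rangeE)
  qed
  have amin: "pmf p a \<le> pmf p c" for c using a by simp
  have "(\<Sum>c\<in>(UNIV::'c set). pmf p a) \<le> (\<Sum>c\<in>UNIV. pmf p c)" using amin by (intro sum_mono) auto
  also have "\<dots> = 1" by (rule sum_pmf_eq_1) auto
  finally have pa: "real n * pmf p a \<le> 1" by (simp add: n_def)
  define P where "P = map (rk cs a) cs"
  have prof: "is_profile P" "is_profile P0"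
    unfolding P_def P0_def is_profile_def using rk_ranking[OF cs(2,1)] by auto
  have "plu P c = plu P0 c" for c
    unfolding plu_def P_def P0_def by (intro arg_cong[where f=card]) (auto simp: top_rk)
  then have fP: "f P = p" using assms(4) prof unfolding plurality_based_def p_def by blast
  define d where "d = dd cs \<alpha> a"
  have lP: "length P = n" using lcs P_def by simp
  have Pne: "P \<noteq> []" using lP n2 by auto
  have dist: "is_distance P d" unfolding d_def by (rule dd_distance)
  have Pi: "P ! i = rk cs a (cs ! i)" if "i < length P" for i using that P_def by simp
  have dv: "d (Inl i) (Inr c) = gg \<alpha> a (cs ! i) c" for i c
    unfolding d_def by (rule dd_val[OF assms(2)])
  have cons: "consistent P d"
    unfolding consistent_def
  proof (intro allI impI)
    fix i c c' assume i: "i < length P" and ra: "ranks_above (P ! i) c c'"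
    have h: "c' \<noteq> cs ! i \<and> (c' = a \<longrightarrow> c = cs ! i)"
      using ranks_above_rk[OF cs(2,1)] ra Pi[OF i] by metis
    show "d (Inl i) (Inr c) \<le> d (Inl i) (Inr c')"
      unfolding dv gg_def using h assms(2,3)
      by (cases "cs ! i = a"; cases "c = a"; cases "c' = a"; cases "c = cs ! i"; simp)
  qed
  have dec: "decisive \<alpha> P d"
    unfolding decisive_def
  proof (intro allI impI)
    fix i c assume i: "i < length P" and c: "c \<noteq> top_choice (P ! i)"
    have c': "c \<noteq> cs ! i" using c Pi[OF i] by (simp add: top_rk)
    have "\<alpha> * 1 \<le> \<alpha> * (1 + (if c \<noteq> a then 1 + \<alpha> else 0))"
      using assms(2) by (intro mult_left_mono) auto
    then show "d (Inl i) (Inr (top_choice (P ! i))) \<le> \<alpha> * d (Inl i) (Inr c)"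
      unfolding dv Pi[OF i] top_rk gg_def using c' assms(2)
      by (cases "cs ! i = a"; cases "c = a"; simp)
  qed
  define K where "K = real n * (1 + \<alpha>) - 2"
  have K0: "K \<ge> 0" using n2 assms(2) unfolding K_def
  proof -
    have "real n * 1 \<le> real n * (1 + \<alpha>)" using n2 assms(2) by (intro mult_left_mono) auto
    then show "real n * (1 + \<alpha>) - 2 \<ge> 0" using n2 by linarith
  qed
  have SC: "SC P d c = (real n - 1) + (if c \<noteq> a then K else 0)" for c
  proof -
    have "SC P d c = (\<Sum>i<n. gg \<alpha> a (cs ! i) c)" unfolding SC_def lP dv ..
    also have "\<dots> = (\<Sum>t\<in>UNIV. gg \<alpha> a t c)"
      using sum.reindex_bij_betw[OF bij_betw_nth[OF cs(2) refl refl], of "\<lambda>t. gg \<alpha> a t c"]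
      cs(1) lcs by (simp add: lessThan_def)
    also have "\<dots> = (real n - 1) + (if c \<noteq> a then K else 0)"
      unfolding gg_alt K_def by (simp add: sum_subtractf sum.distrib n_def algebra_simps)
    finally show ?thesis .
  qed
  have Min: "Min (range (SC P d)) = real n - 1"
    by (rule Min_eqI) (auto simp: SC K0 intro!: image_eqI[of _ _ a])
  have E: "measure_pmf.expectation p (SC P d) = (real n - 1) + K * (1 - pmf p a)"
  proof -
    have "measure_pmf.expectation p (SC P d) = (\<Sum>c\<in>UNIV. SC P d c * pmf p c)"
      by (rule integral_measure_pmf_real) auto
    also have "\<dots> = (\<Sum>c\<in>UNIV. (real n - 1) * pmf p c + K * pmf p c - (if c = a then K * pmf p a else 0))"
      unfolding SC by (intro sum.cong) (auto simp: algebra_simps)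
    also have "\<dots> = (real n - 1) * (\<Sum>c\<in>UNIV. pmf p c) + K * (\<Sum>c\<in>UNIV. pmf p c) - K * pmf p a"
      by (simp add: sum_subtractf sum.distrib sum_distrib_left)
    also have "(\<Sum>c\<in>UNIV. pmf p c) = 1" by (rule sum_pmf_eq_1) auto
    finally show ?thesis by (simp add: algebra_simps)
  qed
  have key: "2 + \<alpha> - 2 / real n \<le> ((real n - 1) + K * (1 - pmf p a)) / (real n - 1)"
  proof -
    have "K * (real n * pmf p a) \<le> K" using mult_left_mono[OF pa K0] by simp
    then have "K * pmf p a \<le> K / real n" using n2 by (simp add: field_simps)
    then have "(real n - 1) * (2 + \<alpha> - 2 / real n) \<le> (real n - 1) + K * (1 - pmf p a)"
      using n2 unfolding K_def by (simp add: field_simps)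
    then show ?thesis using n2 by (simp add: field_simps)
  qed
  have mem: "(P, d) \<in> {(P, d). is_profile P \<and> P \<noteq> [] \<and> is_distance P d \<and> consistent P d \<and> decisive \<alpha> P d}"
    using prof Pne dist cons dec by simp
  show ?thesis unfolding distortion_def
  proof (rule SUP_upper2[OF mem])
    show "ereal (2 + \<alpha> - 2 / real CARD('c)) \<le>
      ereal (measure_pmf.expectation (f (fst (P, d))) (SC (fst (P, d)) (snd (P, d)))) /
      ereal (Min (range (SC (fst (P, d)) (snd (P, d)))))"
      using key n2 by (simp add: fP E Min n_def)
  qed
qed

end
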